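(* Every signed digraph $G$ on $[n]$ admits a nilpotent function $f:\{0,1,2,3\}^n\to\{0,1,2,3\}^n$ of class at most $2$.
   Context: A signed digraph is a digraph (loops allowed, no multiple arcs) in which each arc is labeled positive, negative, or null (unsigned). For a finite interval of integers $A$, a function over $A$ is a map $f:A^n\to A^n$; $f^0=\mathrm{id}$, $f^k=f\circ f^{k-1}$. The interaction graph $G(f)$ is the signed digraph on $[n]$ with an arc $(j,i)$ iff $f_i(a)\neq f_i(b)$ for some $a,b\in A^n$ with $a_j<b_j$ and $a_\ell=b_\ell$ for $\ell\neq j$; the arc is positive if $f_i(a)\leq f_i(b)$ for all such pairs, negative if $f_i(a)\geq f_i(b)$ for all such pairs, and null otherwise. $G$ admits $f$ if $G(f)=G$. $f$ is nilpotent if $f^k$ is constant for some $k\geq 0$; the least such $k$ is its class. *)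

theory Defs
  imports Main
begin

datatype sign = Pos | Neg | Null

text \<open>A signed digraph on the vertex set [n] = {0..<n}: G j i = Some s iff there is an arc
  (j,i) with label s (loops allowed, at most one arc per ordered pair).\<close>
type_synonym sdigraph = "nat \<Rightarrow> nat \<Rightarrow> sign option"

definition signed_digraph :: "nat \<Rightarrow> sdigraph \<Rightarrow> bool" where
  "signed_digraph n G \<longleftrightarrow> (\<forall>j i. (j \<ge> n \<or> i \<ge> n) \<longrightarrow> G j i = None)"

text \<open>Configurations A^n for the interval A = {0..q}, as functions on [n] (zero outside).\<close>
definition conf :: "nat \<Rightarrow> nat \<Rightarrow> (nat \<Rightarrow> nat) set" where
  "conf q n = {x. (\<forall>i<n. x i \<le> q) \<and> (\<forall>i\<ge>n. x i = 0)}"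

definition is_fun :: "nat \<Rightarrow> nat \<Rightarrow> ((nat \<Rightarrow> nat) \<Rightarrow> (nat \<Rightarrow> nat)) \<Rightarrow> bool" where
  "is_fun q n f \<longleftrightarrow> (\<forall>x \<in> conf q n. f x \<in> conf q n)"

definition jpairs :: "nat \<Rightarrow> nat \<Rightarrow> nat \<Rightarrow> ((nat \<Rightarrow> nat) \<times> (nat \<Rightarrow> nat)) set" where
  "jpairs q n j = {(a, b). a \<in> conf q n \<and> b \<in> conf q n \<and> a j < b j \<and> (\<forall>l. l \<noteq> j \<longrightarrow> a l = b l)}"

definition interaction_graph :: "nat \<Rightarrow> nat \<Rightarrow> ((nat \<Rightarrow> nat) \<Rightarrow> (nat \<Rightarrow> nat)) \<Rightarrow> sdigraph" where
  "interaction_graph q n f j i =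
     (if j < n \<and> i < n \<and> (\<exists>(a, b) \<in> jpairs q n j. f a i \<noteq> f b i) then
        (if (\<forall>(a, b) \<in> jpairs q n j. f a i \<le> f b i) then Some Pos
         else if (\<forall>(a, b) \<in> jpairs q n j. f a i \<ge> f b i) then Some Neg
         else Some Null)
      else None)"

definition iter_const :: "nat \<Rightarrow> nat \<Rightarrow> ((nat \<Rightarrow> nat) \<Rightarrow> (nat \<Rightarrow> nat)) \<Rightarrow> nat \<Rightarrow> bool" where
  "iter_const q n f k \<longleftrightarrow> (\<forall>x \<in> conf q n. \<forall>y \<in> conf q n. (f ^^ k) x = (f ^^ k) y)"

definition nilpotent :: "nat \<Rightarrow> nat \<Rightarrow> ((nat \<Rightarrow> nat) \<Rightarrow> (nat \<Rightarrow> nat)) \<Rightarrow> bool" where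
  "nilpotent q n f \<longleftrightarrow> (\<exists>k. iter_const q n f k)"

definition nil_class :: "nat \<Rightarrow> nat \<Rightarrow> ((nat \<Rightarrow> nat) \<Rightarrow> (nat \<Rightarrow> nat)) \<Rightarrow> nat" where
  "nil_class q n f = (LEAST k. iter_const q n f k)"

end

theory Submission
  imports Defs
begin

fun gs :: "sign \<Rightarrow> nat \<Rightarrow> bool" where
  "gs Pos v = (v = 3)"
| "gs Neg v = (v = 0)"
| "gs Null v = (v = 0 \<or> v = 3)"

definition act :: "sdigraph \<Rightarrow> (nat \<Rightarrow> nat) \<Rightarrow> nat \<Rightarrow> bool" where
  "act G x i = (\<exists>l. case G l i of None \<Rightarrow> False | Some s \<Rightarrow> gs s (x l))"

definition ff :: "nat \<Rightarrow> sdigraph \<Rightarrow> (nat \<Rightarrow> nat) \<Rightarrow> (nat \<Rightarrow> nat)" where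
  "ff n G x = (\<lambda>i. if i < n then (if act G x i then 2 else 1) else 0)"

definition base :: "nat \<Rightarrow> nat \<Rightarrow> nat" where
  "base n = (\<lambda>l. if l < n then 1 else 0)"

lemma base_conf: "j < n \<Longrightarrow> v \<le> 3 \<Longrightarrow> (base n)(j := v) \<in> conf 3 n"
  by (auto simp: conf_def base_def)

lemma act_base:
  assumes "signed_digraph n G" "G j i = Some s"
  shows "act G ((base n)(j := v)) i = gs s v"
proof -
  have "\<And>l. l \<noteq> j \<Longrightarrow> \<not> (case G l i of None \<Rightarrow> False | Some t \<Rightarrow> gs t (((base n)(j := v)) l))"
  proof -
    fix l assume "l \<noteq> j"
    show "\<not> (case G l i of None \<Rightarrow> False | Some t \<Rightarrow> gs t (((base n)(j := v)) l))"
    proof (cases "G l i")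
      case None then show ?thesis by simp
    next
      case (Some t)
      then have "l < n" using assms(1) unfolding signed_digraph_def
        by (metis not_le option.distinct(1))
      then show ?thesis using Some \<open>l \<noteq> j\<close> by (cases t) (auto simp: base_def)
    qed
  qed
  then show ?thesis unfolding act_def using assms(2)
    by (metis (no_types, lifting) fun_upd_same option.simps(5))
qed

lemma act_split:
  assumes "(a, b) \<in> jpairs q n j" "G j i = Some s"
  shows "act G a i = (gs s (a j) \<or> (\<exists>l. l \<noteq> j \<and> (case G l i of None \<Rightarrow> False | Some s \<Rightarrow> gs s (b l))))"
    and "act G b i = (gs s (b j) \<or> (\<exists>l. l \<noteq> j \<and> (case G l i of None \<Rightarrow> False | Some s \<Rightarrow> gs s (b l))))"
proof -
  have eq: "\<And>l. l \<noteq> j \<Longrightarrow> a l = b l" using assms(1) by (auto simp: jpairs_def)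
  show "act G a i = (gs s (a j) \<or> (\<exists>l. l \<noteq> j \<and> (case G l i of None \<Rightarrow> False | Some s \<Rightarrow> gs s (b l))))"
    unfolding act_def using assms(2) eq by (metis option.simps(5))
  show "act G b i = (gs s (b j) \<or> (\<exists>l. l \<noteq> j \<and> (case G l i of None \<Rightarrow> False | Some s \<Rightarrow> gs s (b l))))"
    unfolding act_def using assms(2) by (metis option.simps(5))
qed

lemma act_none:
  assumes "(a, b) \<in> jpairs q n j" "G j i = None"
  shows "act G a i = act G b i"
proof -
  have eq: "\<And>l. l \<noteq> j \<Longrightarrow> a l = b l" using assms(1) by (auto simp: jpairs_def)
  show ?thesis unfolding act_def using assms(2) eq
    by (metis option.simps(4))
qed

lemma jp_e:
  assumes "j < n" "v < w" "w \<le> 3"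
  shows "((base n)(j := v), (base n)(j := w)) \<in> jpairs 3 n j"
  using assms by (auto simp: jpairs_def intro!: base_conf)

lemma ig: assumes "signed_digraph n G"
  shows "interaction_graph 3 n (ff n G) = G"
proof (intro ext)
  fix j i
  show "interaction_graph 3 n (ff n G) j i = G j i"
  proof (cases "j < n \<and> i < n")
    case False
    then have "G j i = None" using assms unfolding signed_digraph_def by auto
    then show ?thesis using False unfolding interaction_graph_def by auto
  next
    case True
    hence jn: "j < n" and iN: "i < n" by auto
    let ?e = "\<lambda>v. (base n)(j := v)"
    have fe: "\<And>x. ff n G x i = (if act G x i then 2 else 1)" using iN by (simp add: ff_def)
    show ?thesis
    proof (cases "G j i")
      case None
      then have "\<forall>(a,b)\<in>jpairs 3 n j. ff n G a i = ff n G b i"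
        using act_none fe by fastforce
      then show ?thesis using None by (auto simp: interaction_graph_def)
    next
      case (Some s)
      have ab: "a j < b j" "b j \<le> 3" if "(a,b) \<in> jpairs 3 n j" for a b
        using that jn by (auto simp: jpairs_def conf_def)
      have p01: "(?e 0, ?e 1) \<in> jpairs 3 n j" and p13: "(?e 1, ?e 3) \<in> jpairs 3 n j"
        and p03: "(?e 0, ?e 3) \<in> jpairs 3 n j" using jp_e jn by auto
      have ae: "\<And>v. act G (?e v) i = gs s v" using act_base[OF assms Some] by simp
      show ?thesis
      proof (cases s)
        case Pos
        have mono: "\<forall>(a,b)\<in>jpairs 3 n j. ff n G a i \<le> ff n G b i"
        proof (clarify)
          fix a b assume h: "(a,b) \<in> jpairs 3 n j"
          have "gs s (a j) \<Longrightarrow> gs s (b j)" using ab[OF h] Pos by auto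
          then have "act G a i \<Longrightarrow> act G b i"
            using act_split(1)[where G=G and i=i and j=j and a=a and b=b, OF h Some] act_split(2)[where G=G and i=i and j=j and a=a and b=b, OF h Some] by blast
          then show "ff n G a i \<le> ff n G b i" unfolding fe by simp
        qed
        have ne: "ff n G (?e 0) i \<noteq> ff n G (?e 3) i" using fe ae Pos by simp
        have E: "\<exists>(a,b)\<in>jpairs 3 n j. ff n G a i \<noteq> ff n G b i"
          by (rule bexI[OF _ p03]) (use ne in simp)
        show ?thesis unfolding interaction_graph_def using True E mono Some Pos by simp
      next
        case Neg
        have mono: "\<forall>(a,b)\<in>jpairs 3 n j. ff n G a i \<ge> ff n G b i"
        proof (clarify)
          fix a b assume h: "(a,b) \<in> jpairs 3 n j"
          have "gs s (b j) \<Longrightarrow> gs s (a j)" using ab[OF h] Neg by auto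
          then have "act G b i \<Longrightarrow> act G a i"
            using act_split(1)[where G=G and i=i and j=j and a=a and b=b, OF h Some] act_split(2)[where G=G and i=i and j=j and a=a and b=b, OF h Some] by blast
          then show "ff n G a i \<ge> ff n G b i" unfolding fe by simp
        qed
        have lt: "ff n G (?e 0) i > ff n G (?e 3) i" using fe ae Neg by simp
        have E: "\<exists>(a,b)\<in>jpairs 3 n j. ff n G a i \<noteq> ff n G b i"
          by (rule bexI[OF _ p03]) (use lt in simp)
        have N: "\<not> (\<forall>(a,b)\<in>jpairs 3 n j. ff n G a i \<le> ff n G b i)"
        proof
          assume "\<forall>(a,b)\<in>jpairs 3 n j. ff n G a i \<le> ff n G b i"
          then have "ff n G (?e 0) i \<le> ff n G (?e 3) i" using p03 by blast
          with lt show False by simp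
        qed
        show ?thesis unfolding interaction_graph_def using True E N mono Some Neg by simp
      next
        case Null
        have l1: "ff n G (?e 0) i > ff n G (?e 1) i" and l2: "ff n G (?e 1) i < ff n G (?e 3) i"
          using fe ae Null by simp_all
        have E: "\<exists>(a,b)\<in>jpairs 3 n j. ff n G a i \<noteq> ff n G b i"
          by (rule bexI[OF _ p01]) (use l1 in simp)
        have N1: "\<not> (\<forall>(a,b)\<in>jpairs 3 n j. ff n G a i \<le> ff n G b i)"
        proof
          assume "\<forall>(a,b)\<in>jpairs 3 n j. ff n G a i \<le> ff n G b i"
          then have "ff n G (?e 0) i \<le> ff n G (?e 1) i" using p01 by blast
          with l1 show False by simp
        qed
        have N2: "\<not> (\<forall>(a,b)\<in>jpairs 3 n j. ff n G a i \<ge> ff n G b i)"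
        proof
          assume "\<forall>(a,b)\<in>jpairs 3 n j. ff n G a i \<ge> ff n G b i"
          then have "ff n G (?e 1) i \<ge> ff n G (?e 3) i" using p13 by blast
          with l2 show False by simp
        qed
        show ?thesis unfolding interaction_graph_def using True E N1 N2 Some Null by simp
      qed
    qed
  qed
qed

lemma ff2: assumes "signed_digraph n G"
  shows "ff n G (ff n G x) = base n"
proof (intro ext)
  fix i
  have "\<not> act G (ff n G x) i"
    unfolding act_def
  proof
    assume "\<exists>l. case G l i of None \<Rightarrow> False | Some s \<Rightarrow> gs s (ff n G x l)"
    then obtain l s where G: "G l i = Some s" and g: "gs s (ff n G x l)"
      by (auto split: option.splits)
    then have "l < n" using assms unfolding signed_digraph_def
      by (metis not_le option.distinct(1))
    then show False using g by (cases s) (auto simp: ff_def split: if_splits)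
  qed
  then show "ff n G (ff n G x) i = base n i" by (simp add: ff_def base_def)
qed

theorem proposition4:
  fixes n :: nat and G :: sdigraph
  assumes "signed_digraph n G"
  shows "\<exists>f. is_fun 3 n f \<and> interaction_graph 3 n f = G \<and>
             nilpotent 3 n f \<and> nil_class 3 n f \<le> 2"
proof (intro exI conjI)
  show "is_fun 3 n (ff n G)" by (auto simp: is_fun_def conf_def ff_def)
  show "interaction_graph 3 n (ff n G) = G" using ig[OF assms] .
  have ic: "iter_const 3 n (ff n G) 2"
    unfolding iter_const_def by (simp add: numeral_2_eq_2 ff2[OF assms])
  then show "nilpotent 3 n (ff n G)" by (auto simp: nilpotent_def)
  show "nil_class 3 n (ff n G) \<le> 2" unfolding nil_class_def using ic by (rule Least_le)
qed

end
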